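(* Let $I=(x_-,x_+)\subseteq\mathbb{R}$ be an open interval, let $U\subseteq(0,\infty)\times\mathbb{R}$ be an open convex set, and let $\phi:U\to\mathbb{R}$ be a $C^2$ convex function satisfying $\phi(u,v)=u\,\frac{\partial\phi}{\partial u}(u,v)+v\,\frac{\partial\phi}{\partial v}(u,v)$ on $U$. Let $p,q$ be $C^2$ probability densities on $I$ with $(p(x),p'(x)),(q(x),q'(x))\in U$ for all $x\in I$. Define $$B_\phi(x)=\phi(p,p')-\phi(q,q')-\frac{\partial\phi}{\partial u}(q,q')\,(p-q)-\frac{\partial\phi}{\partial v}(q,q')\,(p'-q'),$$ all functions evaluated at $x$, and $D(p,q)=\int_I B_\phi(x)\,dx$, and let $$S(q,q',q'')=-\frac{\partial\phi}{\partial u}(q,q')+\frac{d}{dx}\Big[\frac{\partial\phi}{\partial v}(q,q')\Big].$$ Assume $\int_I|\phi(p,p')|$, $\int_I|p\,\partial_u\phi(q,q')|$, $\int_I|p'\,\partial_v\phi(q,q')|$ and $\int_I |p\,S(q,q',q'')|$ are finite, and that $p(x)\,\frac{\partial\phi}{\partial v}(q(x),q'(x))\to 0$ as $x\to x_\pm$. Then $$D(p,q)=\int_I\phi(p,p')\,dx+\int_I p\,S(q,q',q'')\,dx,$$ and $D(p,q)\ge 0$. Consequently, if the same hypotheses also hold with $q$ replaced by $p$, then $\int_I p\,S(q,q',q'')\,dx\ \ge\ \int_I p\,S(p,p',p'')\,dx$.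
   Context: $\frac{d}{dx}$ denotes differentiation along the function $x\mapsto(q(x),q'(x))$. *)

theory Defs
  imports "HOL-Analysis.Analysis"
begin

definition ointerval :: "ereal \<Rightarrow> ereal \<Rightarrow> real set" where
  "ointerval a b = {x. a < ereal x \<and> ereal x < b}"

definition left_end :: "ereal \<Rightarrow> real filter" where
  "left_end a = (if a = -\<infinity> then at_bot else at_right (real_of_ereal a))"

definition right_end :: "ereal \<Rightarrow> real filter" where
  "right_end b = (if b = \<infinity> then at_top else at_left (real_of_ereal b))"

definition C2_on :: "(real \<times> real) set \<Rightarrow> (real \<times> real \<Rightarrow> real) \<Rightarrow> bool" where
  "C2_on U f \<longleftrightarrow> (\<exists>f1 f2.
      (\<forall>z\<in>U. (f has_derivative blinfun_apply (f1 z)) (at z)) \<and>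
      (\<forall>z\<in>U. (f1 has_derivative blinfun_apply (f2 z)) (at z)) \<and>
      continuous_on U f2)"

definition phi_u :: "(real \<times> real \<Rightarrow> real) \<Rightarrow> real \<times> real \<Rightarrow> real" where
  "phi_u \<phi> z = frechet_derivative \<phi> (at z) (1, 0)"

definition phi_v :: "(real \<times> real \<Rightarrow> real) \<Rightarrow> real \<times> real \<Rightarrow> real" where
  "phi_v \<phi> z = frechet_derivative \<phi> (at z) (0, 1)"

definition C2_fun_on :: "real set \<Rightarrow> (real \<Rightarrow> real) \<Rightarrow> (real \<Rightarrow> real) \<Rightarrow> (real \<Rightarrow> real) \<Rightarrow> bool" where
  "C2_fun_on I f f1 f2 \<longleftrightarrow>
     (\<forall>x\<in>I. (f has_real_derivative f1 x) (at x)) \<and>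
     (\<forall>x\<in>I. (f1 has_real_derivative f2 x) (at x)) \<and> continuous_on I f2"

definition C2_density :: "real set \<Rightarrow> (real \<Rightarrow> real) \<Rightarrow> (real \<Rightarrow> real) \<Rightarrow> (real \<Rightarrow> real) \<Rightarrow> bool" where
  "C2_density I f f1 f2 \<longleftrightarrow> C2_fun_on I f f1 f2 \<and> (\<forall>x\<in>I. f x \<ge> 0) \<and>
     f integrable_on I \<and> integral I f = 1"

definition Bphi :: "(real \<times> real \<Rightarrow> real) \<Rightarrow> (real \<Rightarrow> real) \<Rightarrow> (real \<Rightarrow> real) \<Rightarrow>
    (real \<Rightarrow> real) \<Rightarrow> (real \<Rightarrow> real) \<Rightarrow> real \<Rightarrow> real" where
  "Bphi \<phi> p p1 q q1 x =
     \<phi> (p x, p1 x) - \<phi> (q x, q1 x)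
     - phi_u \<phi> (q x, q1 x) * (p x - q x) - phi_v \<phi> (q x, q1 x) * (p1 x - q1 x)"

definition Dphi :: "(real \<times> real \<Rightarrow> real) \<Rightarrow> real set \<Rightarrow> (real \<Rightarrow> real) \<Rightarrow> (real \<Rightarrow> real) \<Rightarrow>
    (real \<Rightarrow> real) \<Rightarrow> (real \<Rightarrow> real) \<Rightarrow> real" where
  "Dphi \<phi> I p p1 q q1 = integral I (Bphi \<phi> p p1 q q1)"

definition Sphi :: "(real \<times> real \<Rightarrow> real) \<Rightarrow> (real \<Rightarrow> real) \<Rightarrow> (real \<Rightarrow> real) \<Rightarrow> real \<Rightarrow> real" where
  "Sphi \<phi> q q1 x = - phi_u \<phi> (q x, q1 x) + deriv (\<lambda>y. phi_v \<phi> (q y, q1 y)) x"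

definition pair_hyps :: "(real \<times> real \<Rightarrow> real) \<Rightarrow> ereal \<Rightarrow> ereal \<Rightarrow> (real \<Rightarrow> real) \<Rightarrow> (real \<Rightarrow> real) \<Rightarrow>
    (real \<Rightarrow> real) \<Rightarrow> (real \<Rightarrow> real) \<Rightarrow> bool" where
  "pair_hyps \<phi> a b p p1 q q1 \<longleftrightarrow>
     (\<lambda>x. \<phi> (p x, p1 x)) absolutely_integrable_on ointerval a b \<and>
     (\<lambda>x. p x * phi_u \<phi> (q x, q1 x)) absolutely_integrable_on ointerval a b \<and>
     (\<lambda>x. p1 x * phi_v \<phi> (q x, q1 x)) absolutely_integrable_on ointerval a b \<and>
     (\<lambda>x. p x * Sphi \<phi> q q1 x) absolutely_integrable_on ointerval a b \<and>
     ((\<lambda>x. p x * phi_v \<phi> (q x, q1 x)) \<longlongrightarrow> 0) (left_end a) \<and>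
     ((\<lambda>x. p x * phi_v \<phi> (q x, q1 x)) \<longlongrightarrow> 0) (right_end b)"

end

theory Submission imports Defs begin

lemma seq_left_end:
  fixes l :: "nat \<Rightarrow> real" and a :: ereal
  assumes "\<And>i. a < ereal (l i)" "(\<lambda>i. ereal (l i)) \<longlonglongrightarrow> a"
  shows "filterlim l (left_end a) sequentially"
proof (cases a)
  case (real r)
  have "l \<longlonglongrightarrow> r" using assms(2) real by (simp add: lim_ereal)
  moreover have "\<forall>\<^sub>F i in sequentially. l i > r" using assms(1) real by simp
  ultimately show ?thesis using real by (simp add: left_end_def tendsto_imp_filterlim_at_right)
next
  case PInf then show ?thesis using assms(1) by simp
next
  case MInf
  have "filterlim l at_bot sequentially"
    unfolding filterlim_at_bot
  proof
    fix Z :: real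
    have "eventually (\<lambda>i. ereal (l i) < ereal Z) sequentially"
      using assms(2) MInf by (intro order_tendstoD(2)) auto
    then show "\<forall>\<^sub>F i in sequentially. l i \<le> Z" by (auto elim: eventually_mono)
  qed
  then show ?thesis using MInf by (simp add: left_end_def)
qed

lemma seq_right_end:
  fixes u :: "nat \<Rightarrow> real" and b :: ereal
  assumes "\<And>i. ereal (u i) < b" "(\<lambda>i. ereal (u i)) \<longlonglongrightarrow> b"
  shows "filterlim u (right_end b) sequentially"
proof (cases b)
  case (real r)
  have "u \<longlonglongrightarrow> r" using assms(2) real by (simp add: lim_ereal)
  moreover have "\<forall>\<^sub>F i in sequentially. u i < r" using assms(1) real by simp
  ultimately show ?thesis using real by (simp add: right_end_def tendsto_imp_filterlim_at_left)
next
  case MInf then show ?thesis using assms(1) by simp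
next
  case PInf
  have "filterlim u at_top sequentially"
    unfolding filterlim_at_top
  proof
    fix Z :: real
    have "eventually (\<lambda>i. ereal Z < ereal (u i)) sequentially"
      using assms(2) PInf by (intro order_tendstoD(1)) auto
    then show "\<forall>\<^sub>F i in sequentially. Z \<le> u i" by (auto elim: eventually_mono)
  qed
  then show ?thesis using PInf by (simp add: right_end_def)
qed

lemma FTC_improper:
  fixes g g' :: "real \<Rightarrow> real" and a b :: ereal
  assumes ab: "a < b"
    and der: "\<And>x. x \<in> ointerval a b \<Longrightarrow> (g has_real_derivative g' x) (at x)"
    and ai: "g' absolutely_integrable_on ointerval a b"
    and la: "(g \<longlongrightarrow> 0) (left_end a)" and lb: "(g \<longlongrightarrow> 0) (right_end b)"
  shows "integral (ointerval a b) g' = 0"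
proof -
  have I: "ointerval a b = einterval a b" by (simp add: ointerval_def einterval_def)
  obtain u l where approx:
    "einterval a b = (\<Union>i. {l i .. u i})"
    "incseq u" "decseq l" "\<And>i. l i < u i" "\<And>i. a < l i" "\<And>i. u i < b"
    "l \<longlonglongrightarrow> a" "u \<longlonglongrightarrow> b"
    by (blast intro: einterval_Icc_approximation[OF ab])
  define f where "f k x = (if x \<in> {l k..u k} then g' x else 0)" for k x
  have sub: "{l k..u k} \<subseteq> ointerval a b" for k
    using approx(1) I by blast
  have hi: "\<And>k. (g' has_integral (g (u k) - g (l k))) {l k..u k}"
  proof -
    fix k
    show "(g' has_integral (g (u k) - g (l k))) {l k..u k}"
      apply (rule fundamental_theorem_of_calculus)
      using approx(4)[of k] apply simp
      using sub[of k] der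
      by (metis has_real_derivative_iff_has_vector_derivative has_vector_derivative_at_within subsetD)
  qed
  have fi: "f k integrable_on ointerval a b" and fint: "integral (ointerval a b) (f k) = g (u k) - g (l k)" for k
  proof -
    have e: "{l k..u k} \<inter> ointerval a b = {l k..u k}" using sub[of k] by blast
    show "f k integrable_on ointerval a b"
      unfolding f_def using integrable_restrict_Int[where S="{l k..u k}" and T="ointerval a b" and f=g'] e hi[of k]
      by (auto simp: has_integral_integrable)
    show "integral (ointerval a b) (f k) = g (u k) - g (l k)"
      unfolding f_def using integral_restrict_Int[where S="{l k..u k}" and T="ointerval a b" and f=g'] e hi[of k]
      by (simp add: integral_unique)
  qed
  have hint: "(\<lambda>x. norm (g' x)) integrable_on ointerval a b"
    using ai by (simp add: absolutely_integrable_on_def)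
  have conv: "(\<lambda>k. f k x) \<longlonglongrightarrow> g' x" if x: "x \<in> ointerval a b" for x
  proof -
    obtain i where "x \<in> {l i..u i}" using x approx(1) I by blast
    then have "\<forall>k\<ge>i. x \<in> {l k..u k}"
      using approx(2,3) unfolding incseq_def decseq_def by (meson atLeastAtMost_iff order_trans)
    then have "\<forall>\<^sub>F k in sequentially. f k x = g' x"
      by (auto simp: f_def eventually_sequentially)
    then show ?thesis by (rule tendsto_eventually)
  qed
  have lim1: "(\<lambda>k. integral (ointerval a b) (f k)) \<longlonglongrightarrow> integral (ointerval a b) g'"
    by (rule dominated_convergence(2)[OF fi hint _ conv]) (auto simp: f_def)
  have gl: "(\<lambda>k. g (l k)) \<longlonglongrightarrow> 0"
    using filterlim_compose[OF la seq_left_end[OF approx(5,7)]] .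
  have gu: "(\<lambda>k. g (u k)) \<longlonglongrightarrow> 0"
    using filterlim_compose[OF lb seq_right_end[OF approx(6,8)]] .
  have "(\<lambda>k. integral (ointerval a b) (f k)) \<longlonglongrightarrow> 0"
    unfolding fint using tendsto_diff[OF gu gl] by simp
  with lim1 show ?thesis using LIMSEQ_unique by blast
qed

lemma convex_tangent:
  fixes \<phi> :: "real \<times> real \<Rightarrow> real"
  assumes U: "convex U" "open U" and cv: "convex_on U \<phi>" and PQ: "P \<in> U" "Q \<in> U"
    and D: "(\<phi> has_derivative D) (at Q)"
  shows "D (P - Q) \<le> \<phi> P - \<phi> Q"
proof -
  define d where "d = P - Q"
  define A where "A = {t::real. Q + t *\<^sub>R d \<in> U}"
  define \<psi> where "\<psi> t = \<phi> (Q + t *\<^sub>R d)" for t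
  have aff: "(1 - u) *\<^sub>R (Q + x *\<^sub>R d) + u *\<^sub>R (Q + y *\<^sub>R d) = Q + ((1 - u) * x + u * y) *\<^sub>R d" for u x y :: real
    by (simp add: algebra_simps)
  have cA: "convex A"
    unfolding convex_alt A_def using U(1) aff by (auto simp: convex_alt) (metis aff)
  have cpsi: "convex_on A \<psi>"
  proof (rule convex_onI[OF _ cA])
    fix t x y :: real assume "x \<in> A" "y \<in> A" "0 < t" "t < 1"
    then show "\<psi> ((1 - t) *\<^sub>R x + t *\<^sub>R y) \<le> (1 - t) * \<psi> x + t * \<psi> y"
      using convex_onD[OF cv, of t "Q + x *\<^sub>R d" "Q + y *\<^sub>R d"] aff[of t x y]
      by (auto simp: A_def \<psi>_def)
  qed
  have oA: "open A"
    unfolding A_def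
    by (rule open_vimage[OF U(2), unfolded vimage_def]) (intro continuous_intros)
  have z: "0 \<in> interior A" using PQ oA by (simp add: A_def interior_open)
  have o: "1 \<in> A" using PQ by (simp add: A_def d_def)
  have bl: "bounded_linear D" using D by (rule has_derivative_bounded_linear)
  have "((\<lambda>t. Q + t *\<^sub>R d) has_derivative (\<lambda>t. t *\<^sub>R d)) (at 0)"
    by (auto intro!: derivative_eq_intros)
  moreover have "(\<phi> has_derivative D) (at (Q + 0 *\<^sub>R d))" using D by simp
  ultimately have "(\<psi> has_derivative (\<lambda>t. D (t *\<^sub>R d))) (at 0)"
    unfolding \<psi>_def using has_derivative_compose by fastforce
  moreover have "(\<lambda>t. D (t *\<^sub>R d)) = (*) (D d)"
    using linear_scale[OF bounded_linear.linear[OF bl]] by (auto simp: mult.commute)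
  ultimately have "(\<psi> has_field_derivative D d) (at 0 within A)"
    by (simp add: has_field_derivative_def has_derivative_at_withinI)
  from convex_on_imp_above_tangent[OF cpsi convex_connected[OF cA] z o this]
  show ?thesis by (simp add: \<psi>_def d_def)
qed

lemma main_gen:
  fixes a b :: ereal and U :: "(real \<times> real) set" and \<phi> :: "real \<times> real \<Rightarrow> real"
    and p p1 p2 q q1 q2 :: "real \<Rightarrow> real"
  assumes ab: "a < b"
    and oU: "open U" and cU: "convex U"
    and C2: "C2_on U \<phi>" and cv: "convex_on U \<phi>"
    and hom: "\<forall>u v. (u, v) \<in> U \<longrightarrow> \<phi> (u, v) = u * phi_u \<phi> (u, v) + v * phi_v \<phi> (u, v)"
    and pC: "C2_fun_on (ointerval a b) p p1 p2"
    and qC: "C2_fun_on (ointerval a b) q q1 q2"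
    and inU: "\<forall>x\<in>ointerval a b. (p x, p1 x) \<in> U \<and> (q x, q1 x) \<in> U"
    and H: "pair_hyps \<phi> a b p p1 q q1"
  shows "Bphi \<phi> p p1 q q1 absolutely_integrable_on ointerval a b
       \<and> Dphi \<phi> (ointerval a b) p p1 q q1
           = integral (ointerval a b) (\<lambda>x. \<phi> (p x, p1 x))
             + integral (ointerval a b) (\<lambda>x. p x * Sphi \<phi> q q1 x)
       \<and> Dphi \<phi> (ointerval a b) p p1 q q1 \<ge> 0"
proof -
  define I where "I = ointerval a b"
  have oI: "open I" unfolding I_def ointerval_def
    using open_einterval[of a b] by (simp add: einterval_def)
  obtain f1 f2 where f1: "\<And>z. z \<in> U \<Longrightarrow> (\<phi> has_derivative blinfun_apply (f1 z)) (at z)"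
    and f2: "\<And>z. z \<in> U \<Longrightarrow> (f1 has_derivative blinfun_apply (f2 z)) (at z)"
    using C2 unfolding C2_on_def by blast
  have fd: "frechet_derivative \<phi> (at z) = blinfun_apply (f1 z)" if "z \<in> U" for z
    using frechet_derivative_at[OF f1[OF that]] by simp
  have lin: "blinfun_apply (f1 z) (w1, w2) = w1 * phi_u \<phi> z + w2 * phi_v \<phi> z" if "z \<in> U" for z w1 w2
  proof -
    have "(w1, w2) = w1 *\<^sub>R (1, 0) + w2 *\<^sub>R (0, 1)" by simp
    then have "blinfun_apply (f1 z) (w1, w2) = w1 * blinfun_apply (f1 z) (1,0) + w2 * blinfun_apply (f1 z) (0,1)"
      by (metis blinfun.add_right blinfun.scaleR_right real_scaleR_def)
    then show ?thesis using fd[OF that] by (simp add: phi_u_def phi_v_def)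
  qed
  define A where "A x = \<phi> (p x, p1 x)" for x
  define Bu where "Bu x = p x * phi_u \<phi> (q x, q1 x)" for x
  define Bv where "Bv x = p1 x * phi_v \<phi> (q x, q1 x)" for x
  define Sx where "Sx x = p x * Sphi \<phi> q q1 x" for x
  have iA: "A absolutely_integrable_on I" and iBu: "Bu absolutely_integrable_on I"
    and iBv: "Bv absolutely_integrable_on I" and iS: "Sx absolutely_integrable_on I"
    and limL: "((\<lambda>x. p x * phi_v \<phi> (q x, q1 x)) \<longlongrightarrow> 0) (left_end a)"
    and limR: "((\<lambda>x. p x * phi_v \<phi> (q x, q1 x)) \<longlongrightarrow> 0) (right_end b)"
    using H unfolding pair_hyps_def A_def Bu_def Bv_def Sx_def I_def by auto
  have Beq: "Bphi \<phi> p p1 q q1 x = A x - Bu x - Bv x" if "x \<in> I" for x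
    using hom inU that unfolding Bphi_def A_def Bu_def Bv_def I_def
    by (auto simp: algebra_simps)
  have Bnn: "0 \<le> Bphi \<phi> p p1 q q1 x" if "x \<in> I" for x
  proof -
    have P: "(p x, p1 x) \<in> U" and Q: "(q x, q1 x) \<in> U" using inU that by (auto simp: I_def)
    from convex_tangent[OF cU oU cv P Q f1[OF Q]]
    show ?thesis using lin[OF Q, of "p x - q x" "p1 x - q1 x"] by (simp add: Bphi_def algebra_simps)
  qed
  define V where "V y = phi_v \<phi> (q y, q1 y)" for y
  have Vdiff: "V differentiable (at x)" if x: "x \<in> I" for x
  proof -
    define h where "h z = blinfun_apply (f1 z) (0, 1)" for z
    define \<gamma> where "\<gamma> y = (q y, q1 y)" for y
    have Q: "\<gamma> x \<in> U" using inU x by (auto simp: I_def \<gamma>_def)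
    have "(h has_derivative (\<lambda>w. blinfun_apply (f2 (\<gamma> x) w) (0,1))) (at (\<gamma> x))"
      unfolding h_def by (rule bounded_linear.has_derivative[OF blinfun.bounded_linear_left f2[OF Q]])
    then have hd: "h differentiable (at (\<gamma> x))" by (auto simp: differentiable_def)
    have "(q has_real_derivative q1 x) (at x)" "(q1 has_real_derivative q2 x) (at x)"
      using qC x by (auto simp: C2_fun_on_def I_def)
    then have "(\<gamma> has_derivative (\<lambda>t. (q1 x * t, q2 x * t))) (at x)"
      unfolding \<gamma>_def by (intro has_derivative_Pair) (auto dest: has_field_derivative_imp_has_derivative)
    then have gd: "\<gamma> differentiable (at x)" by (auto simp: differentiable_def)
    from differentiable_chain_at[OF gd hd] obtain D' where D': "((h \<circ> \<gamma>) has_derivative D') (at x)"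
      by (auto simp: differentiable_def)
    have "\<And>y. y\<in>I \<Longrightarrow> (h \<circ> \<gamma>) y = V y"
      using inU fd by (auto simp: I_def V_def h_def \<gamma>_def phi_v_def)
    from has_derivative_transform_within_open[OF D' oI x this]
    show ?thesis by (auto simp: differentiable_def)
  qed
  have gder: "((\<lambda>y. p y * V y) has_real_derivative (Bv x + Sx x + Bu x)) (at x)" if x: "x \<in> I" for x
  proof -
    have "(V has_real_derivative deriv V x) (at x)"
      using Vdiff[OF x] DERIV_deriv_iff_real_differentiable by blast
    moreover have "(p has_real_derivative p1 x) (at x)" using pC x by (auto simp: C2_fun_on_def I_def)
    ultimately have "((\<lambda>y. p y * V y) has_real_derivative (p1 x * V x + p x * deriv V x)) (at x)"
      by (auto intro!: derivative_eq_intros)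
    moreover have "p1 x * V x + p x * deriv V x = Bv x + Sx x + Bu x"
      unfolding Bv_def Sx_def Bu_def Sphi_def V_def by (simp add: algebra_simps)
    ultimately show ?thesis by simp
  qed
  have iG: "(\<lambda>x. Bv x + Sx x + Bu x) absolutely_integrable_on I"
    using iBv iS iBu by (intro set_integral_add(1)) auto
  have zero: "integral I (\<lambda>x. Bv x + Sx x + Bu x) = 0"
    using FTC_improper[OF ab gder[unfolded I_def] iG[unfolded I_def]] limL limR
    unfolding I_def V_def by simp
  have int: "f absolutely_integrable_on I \<Longrightarrow> f integrable_on I" for f :: "real \<Rightarrow> real"
    by (simp add: absolutely_integrable_on_def)
  have z2: "integral I Bv + integral I Sx + integral I Bu = 0"
    using zero int[OF iBv] int[OF iS] int[OF iBu]
    by (simp add: integral_add integrable_add)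
  have iB: "Bphi \<phi> p p1 q q1 absolutely_integrable_on I"
  proof -
    have "(\<lambda>x. A x - Bu x - Bv x) absolutely_integrable_on I"
      using iA iBu iBv by (intro set_integral_diff(1)) auto
    then show ?thesis
      by (rule absolutely_integrable_spike[of _ _ "{}"]) (auto simp: Beq)
  qed
  have D: "Dphi \<phi> I p p1 q q1 = integral I A + integral I Sx"
  proof -
    have "Dphi \<phi> I p p1 q q1 = integral I (\<lambda>x. A x - Bu x - Bv x)"
      unfolding Dphi_def by (rule integral_cong) (simp add: Beq)
    also have "\<dots> = integral I A - integral I Bu - integral I Bv"
      using int[OF iA] int[OF iBu] int[OF iBv]
      by (simp add: integral_diff integrable_diff)
    finally show ?thesis using z2 by simp
  qed
  have Dnn: "0 \<le> Dphi \<phi> I p p1 q q1"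
    unfolding Dphi_def by (rule integral_nonneg[OF int[OF iB] Bnn])
  show ?thesis using iB D Dnn unfolding I_def A_def Sx_def by simp
qed


theorem mainTheorem6:
  fixes a b :: ereal
    and U :: "(real \<times> real) set"
    and \<phi> :: "real \<times> real \<Rightarrow> real"
    and p p1 p2 q q1 q2 :: "real \<Rightarrow> real"
  assumes "a < b"
    and "open U" and "convex U" and "U \<subseteq> {z. fst z > 0}"
    and "C2_on U \<phi>" and "convex_on U \<phi>"
    and "\<forall>u v. (u, v) \<in> U \<longrightarrow> \<phi> (u, v) = u * phi_u \<phi> (u, v) + v * phi_v \<phi> (u, v)"
    and "C2_density (ointerval a b) p p1 p2"
    and "C2_density (ointerval a b) q q1 q2"
    and "\<forall>x\<in>ointerval a b. (p x, p1 x) \<in> U \<and> (q x, q1 x) \<in> U"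
    and "pair_hyps \<phi> a b p p1 q q1"
  shows "Bphi \<phi> p p1 q q1 absolutely_integrable_on ointerval a b
       \<and> Dphi \<phi> (ointerval a b) p p1 q q1
           = integral (ointerval a b) (\<lambda>x. \<phi> (p x, p1 x))
             + integral (ointerval a b) (\<lambda>x. p x * Sphi \<phi> q q1 x)
       \<and> Dphi \<phi> (ointerval a b) p p1 q q1 \<ge> 0
       \<and> (pair_hyps \<phi> a b p p1 p p1 \<longrightarrow>
            integral (ointerval a b) (\<lambda>x. p x * Sphi \<phi> q q1 x)
              \<ge> integral (ointerval a b) (\<lambda>x. p x * Sphi \<phi> p p1 x))"
proof -
  have pC: "C2_fun_on (ointerval a b) p p1 p2" and qC: "C2_fun_on (ointerval a b) q q1 q2"
    using assms(8,9) by (auto simp: C2_density_def)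
  have R1: ?thesis if "\<not> pair_hyps \<phi> a b p p1 p p1" 
    using main_gen[OF assms(1,2,3,5,6,7) pC qC assms(10,11)] that by blast
  have R2: ?thesis if PP: "pair_hyps \<phi> a b p p1 p p1"
  proof -
    note M1 = main_gen[OF assms(1,2,3,5,6,7) pC qC assms(10,11)]
    have inU': "\<forall>x\<in>ointerval a b. (p x, p1 x) \<in> U \<and> (p x, p1 x) \<in> U" using assms(10) by blast
    note M2 = main_gen[OF assms(1,2,3,5,6,7) pC pC inU' PP]
    have "Dphi \<phi> (ointerval a b) p p1 p p1 = 0"
      unfolding Dphi_def Bphi_def by simp
    then show ?thesis using M1 M2 by linarith
  qed
  show ?thesis using R1 R2 by blast
qed

end
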